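(* Let $G'$ be a connected graph, let $w$ be a vertex of $G'$, let $k\ge 2$, and let $G$ be obtained from $G'$ by adding $k$ new vertices $1,\dots,k$, each adjacent only to $w$. Let $\Delta$ be the distance squared matrix of $G$, let $\Delta_k$ be the distance squared matrix of the graph $G\setminus\{1,\dots,k-1\}$ (that is, $G'$ with the single pendant vertex $k$ attached at $w$), and let $\mathbf e_k$ be the standard basis vector corresponding to vertex $k$ in the index set of $\Delta_k$. Then \[ i_-(\Delta)=k-1+i_-\!\left(\Delta_k+\left(4-\tfrac{4}{k}\right)\mathbf e_k\mathbf e_k^T\right). \]
   Context: For a connected graph $G$ with vertices $1,\dots,n$, the distance squared matrix $\Delta$ is the $n\times n$ matrix with $(i,j)$ entry $d_{ij}^2$, where $d_{ij}$ is the graph distance between $i$ and $j$. For a real symmetric matrix $M$, $i_-(M)$ denotes the number of negative eigenvalues of $M$ counted with multiplicity. *)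

theory Defs
  imports "Jordan_Normal_Form.Char_Poly"
begin

definition simple_graph :: "nat \<Rightarrow> (nat \<Rightarrow> nat \<Rightarrow> bool) \<Rightarrow> bool" where
  "simple_graph N Adj \<longleftrightarrow>
     (\<forall>u v. Adj u v \<longrightarrow> u < N \<and> v < N \<and> u \<noteq> v \<and> Adj v u)"

definition is_walk :: "nat \<Rightarrow> (nat \<Rightarrow> nat \<Rightarrow> bool) \<Rightarrow> nat list \<Rightarrow> bool" where
  "is_walk N Adj xs \<longleftrightarrow> xs \<noteq> [] \<and> set xs \<subseteq> {..<N} \<and>
     (\<forall>i. Suc i < length xs \<longrightarrow> Adj (xs ! i) (xs ! Suc i))"

definition connected_graph :: "nat \<Rightarrow> (nat \<Rightarrow> nat \<Rightarrow> bool) \<Rightarrow> bool" where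
  "connected_graph N Adj \<longleftrightarrow> 0 < N \<and>
     (\<forall>u<N. \<forall>v<N. \<exists>xs. is_walk N Adj xs \<and> hd xs = u \<and> last xs = v)"

definition gdist :: "nat \<Rightarrow> (nat \<Rightarrow> nat \<Rightarrow> bool) \<Rightarrow> nat \<Rightarrow> nat \<Rightarrow> nat" where
  "gdist N Adj u v = (LEAST l. \<exists>xs. is_walk N Adj xs \<and> hd xs = u \<and> last xs = v \<and> length xs = Suc l)"

definition dist_sq_mat :: "nat \<Rightarrow> (nat \<Rightarrow> nat \<Rightarrow> bool) \<Rightarrow> real mat" where
  "dist_sq_mat N Adj = mat N N (\<lambda>(i, j). (real (gdist N Adj i j))^2)"

text \<open>Number of negative eigenvalues, counted with multiplicity (as roots of the
  characteristic polynomial); for real symmetric matrices all eigenvalues are real.\<close>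
definition neg_inertia :: "real mat \<Rightarrow> nat" where
  "neg_inertia A = (\<Sum>a \<in> {a. a < 0 \<and> poly (char_poly A) a = 0}. order a (char_poly A))"

definition add_pendants :: "nat \<Rightarrow> (nat \<Rightarrow> nat \<Rightarrow> bool) \<Rightarrow> nat \<Rightarrow> nat \<Rightarrow> nat \<Rightarrow> nat \<Rightarrow> bool" where
  "add_pendants n Adj' w k u v \<longleftrightarrow>
     (u < n \<and> v < n \<and> Adj' u v) \<or>
     (u = w \<and> n \<le> v \<and> v < n + k) \<or>
     (v = w \<and> n \<le> u \<and> u < n + k)"

end

theory Submission
  imports Defs
begin

definition negc :: "real poly \<Rightarrow> nat" where
  "negc p = (\<Sum>a \<in> {a. a < 0 \<and> poly p a = 0}. order a p)"

lemma neg_inertia_negc: "neg_inertia A = negc (char_poly A)"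
  unfolding neg_inertia_def negc_def by simp

lemma negc_mult:
  assumes p: "p \<noteq> 0" and q: "q \<noteq> 0"
  shows "negc (p * q) = negc p + negc q"
proof -
  let ?R = "\<lambda>p. {a::real. a < 0 \<and> poly p a = 0}"
  have fin: "finite (?R p)" "finite (?R q)"
    using poly_roots_finite[OF p] poly_roots_finite[OF q] by (auto intro: finite_subset)
  have pq: "p * q \<noteq> 0" using p q by simp
  have R: "?R (p*q) = ?R p \<union> ?R q" by auto
  have "negc (p*q) = (\<Sum>a \<in> ?R p \<union> ?R q. order a p + order a q)"
    unfolding negc_def R using order_mult[OF pq] by simp
  also have "\<dots> = (\<Sum>a \<in> ?R p \<union> ?R q. order a p) + (\<Sum>a \<in> ?R p \<union> ?R q. order a q)"
    by (rule sum.distrib)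
  also have "(\<Sum>a \<in> ?R p \<union> ?R q. order a p) = (\<Sum>a \<in> ?R p. order a p)"
    by (rule sum.mono_neutral_right, use fin in auto, auto simp: order_root p)
  also have "(\<Sum>a \<in> ?R p \<union> ?R q. order a q) = (\<Sum>a \<in> ?R q. order a q)"
    by (rule sum.mono_neutral_right, use fin in auto, auto simp: order_root q)
  finally show ?thesis unfolding negc_def .
qed

lemma negc_linear: "negc [:-a, 1:] = (if a < 0 then 1 else 0)"
proof -
  have "{x. x < 0 \<and> poly [:-a, 1:] x = 0} = (if a < 0 then {a} else {})" by auto
  then show ?thesis unfolding negc_def by (simp add: order_linear)
qed

lemma negc_one: "negc 1 = 0"
  unfolding negc_def by simp

lemma negc_prod_linear: "negc (\<Prod>a \<leftarrow> xs. [:-a, 1:]) = length (filter (\<lambda>a. a < 0) xs)"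
proof (induction xs)
  case Nil
  then show ?case by (simp add: negc_one)
next
  case (Cons x xs)
  have nz: "(\<Prod>a \<leftarrow> xs. [:-a, 1:]) \<noteq> (0::real poly)"
    by (auto simp: prod_list_zero_iff)
  have "negc (\<Prod>a \<leftarrow> x#xs. [:-a, 1:]) = negc ([:-x,1:] * (\<Prod>a \<leftarrow> xs. [:-a, 1:]))" by simp
  also have "\<dots> = negc [:-x,1:] + negc (\<Prod>a \<leftarrow> xs. [:-a, 1:])"
    by (rule negc_mult, use nz in auto)
  finally show ?case using Cons by (simp add: negc_linear)
qed

lemma mult_carrier_dims:
  fixes A B :: "'a :: semiring_0 mat"
  shows "dim_row A = nr \<Longrightarrow> dim_col B = nc \<Longrightarrow> A * B \<in> carrier_mat nr nc"
  unfolding carrier_mat_def by simp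

definition dmat :: "nat \<Rightarrow> (nat \<Rightarrow> real) \<Rightarrow> real mat" where
  "dmat n d = mat n n (\<lambda>(i,j). if i = j then d i else 0)"

lemma dmat_carrier[simp]: "dmat n d \<in> carrier_mat n n"
  unfolding dmat_def by simp

lemma dmat_dims[simp]: "dim_row (dmat n d) = n" "dim_col (dmat n d) = n"
  unfolding dmat_def by simp_all

lemma dmat_index[simp]: "i < n \<Longrightarrow> j < n \<Longrightarrow> dmat n d $$ (i,j) = (if i = j then d i else 0)"
  unfolding dmat_def by simp

lemma neg_inertia_dmat: "neg_inertia (dmat n d) = card {i. i < n \<and> d i < 0}"
proof -
  have ut: "upper_triangular (dmat n d)" unfolding upper_triangular_def by auto
  have dg: "diag_mat (dmat n d) = map d [0..<n]"
    unfolding diag_mat_def by (rule nth_equalityI, auto)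
  have "neg_inertia (dmat n d) = length (filter (\<lambda>a. a < 0) (map d [0..<n]))"
    unfolding neg_inertia_negc char_poly_upper_triangular[OF dmat_carrier ut] dg
    by (rule negc_prod_linear)
  also have "\<dots> = card {i. i < n \<and> d i < 0}"
    unfolding length_filter_conv_card by (intro arg_cong[where f=card]) auto
  finally show ?thesis .
qed

lemma neg_inertia_similar: "similar_mat A B \<Longrightarrow> neg_inertia A = neg_inertia B"
  unfolding neg_inertia_negc using char_poly_similar by metis

lemma householder:
  fixes v :: "real vec"
  assumes v: "v \<in> carrier_vec n" and vv: "v \<bullet> v = 1" and n: "0 < n"
  shows "\<exists>W \<in> carrier_mat n n. transpose_mat W * W = 1\<^sub>m n \<and> W *\<^sub>v unit_vec n 0 = v"
proof (cases "v = unit_vec n 0")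
  case True
  then show ?thesis by (intro bexI[of _ "1\<^sub>m n"]) auto
next
  case False
  define u where "u l = v $ l - (if l = 0 then 1 else 0)" for l
  define c where "c = (\<Sum>l\<in>{0..<n}. (u l)^2)"
  define a where "a = 2 / c"
  define hf where "hf i j = (if i = j then 1 else 0) - a * u i * u j" for i j
  define H where "H = mat n n (\<lambda>(i,j). hf i j)"
  have H: "H \<in> carrier_mat n n" unfolding H_def by simp
  from False obtain l where l: "l < n" "v $ l \<noteq> unit_vec n 0 $ l"
    using v by (metis carrier_vecD dim_vec eq_vecI index_unit_vec(3))
  hence ul: "u l \<noteq> 0" using l unfolding u_def by (auto simp: unit_vec_def)
  have "0 < c" unfolding c_def
    by (rule sum_pos2[of _ l], use l ul in auto)
  have vv': "(\<Sum>l\<in>{0..<n}. (v $ l)^2) = 1" using vv v unfolding scalar_prod_def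
    by (simp add: power2_eq_square)
  have "c = (\<Sum>l\<in>{0..<n}. (v $ l)^2 - 2 * (if l = 0 then v $ l else 0) + (if l = 0 then 1 else 0))"
    unfolding c_def u_def by (intro sum.cong refl, auto simp: power2_eq_square algebra_simps)
  also have "\<dots> = 2 - 2 * v $ 0"
    using n by (simp add: sum.distrib sum_subtractf vv' sum_distrib_left[symmetric])
  finally have c2: "c = 2 - 2 * v $ 0" .
  have u0: "u 0 = - c / 2" unfolding u_def c2 by simp
  have HH: "transpose_mat H * H = 1\<^sub>m n"
  proof (rule eq_matI)
    fix i j assume i: "i < dim_row (1\<^sub>m n)" and j: "j < dim_col (1\<^sub>m n)"
    have pt: "hf l i * hf l j = (if l = i then (if i = j then 1 else 0) else 0)
       - (if l = j then a * u i * u l else 0) - (if l = i then a * u l * u j else 0)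
       + a^2 * u i * u j * (u l)^2" for l
      unfolding hf_def by (auto simp: power2_eq_square algebra_simps)
    have "(transpose_mat H * H) $$ (i,j) = (\<Sum>l\<in>{0..<n}. hf l i * hf l j)"
      using i j H unfolding H_def by (simp add: scalar_prod_def)
    also have "\<dots> = (\<Sum>l\<in>{0..<n}. (if l = i then (if i = j then 1 else 0) else 0))
       - (\<Sum>l\<in>{0..<n}. (if l = j then a * u i * u l else 0))
       - (\<Sum>l\<in>{0..<n}. (if l = i then a * u l * u j else 0))
       + (\<Sum>l\<in>{0..<n}. a^2 * u i * u j * (u l)^2)"
      unfolding pt by (simp add: sum.distrib sum_subtractf)
    also have "\<dots> = (if i = j then 1 else 0) - 2 * a * u i * u j + a^2 * u i * u j * c"
      using i j by (simp add: c_def sum_distrib_left[symmetric] if_distrib)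
    also have "\<dots> = (if i = j then 1 else 0)"
      unfolding a_def using \<open>0 < c\<close> by (simp add: power2_eq_square field_simps)
    finally show "(transpose_mat H * H) $$ (i,j) = 1\<^sub>m n $$ (i,j)" using i j by simp
  qed (use H in auto)
  have Hv: "H *\<^sub>v unit_vec n 0 = v"
  proof (rule eq_vecI)
    fix i assume i: "i < dim_vec v"
    hence i': "i < n" using v by simp
    have "(H *\<^sub>v unit_vec n 0) $ i = hf i 0"
      using i' n unfolding H_def by (simp add: scalar_prod_def unit_vec_def if_distrib cong: if_cong)
    also have "\<dots> = v $ i"
      unfolding hf_def a_def u0 using \<open>0 < c\<close> by (simp add: u_def field_simps)
    finally show "(H *\<^sub>v unit_vec n 0) $ i = v $ i" .
  qed (use v H in auto)
  show ?thesis using H HH Hv by blast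
qed

lemma real_sym_eigen:
  fixes A :: "real mat"
  assumes A: "A \<in> carrier_mat n n" and sym: "transpose_mat A = A" and n: "0 < n"
  shows "\<exists>lam v. v \<in> carrier_vec n \<and> v \<noteq> 0\<^sub>v n \<and> A *\<^sub>v v = lam \<cdot>\<^sub>v v"
proof -
  let ?Ac = "map_mat (complex_of_real) A"
  have Ac: "?Ac \<in> carrier_mat n n" using A by simp
  have cp: "char_poly ?Ac = map_poly of_real (char_poly A)" by (rule of_real_hom.char_poly_hom[OF A])
  have "degree (char_poly ?Ac) = n" using degree_monic_char_poly[OF Ac] by simp
  then obtain z where z: "poly (char_poly ?Ac) z = 0"
    using fundamental_theorem_of_algebra constant_degree n by (metis not_gr0)
  then have "eigenvalue ?Ac z" using eigenvalue_root_char_poly[OF Ac] by simp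
  then obtain v where ev: "eigenvector ?Ac v z" unfolding eigenvalue_def by auto
  hence v: "v \<in> carrier_vec n" and v0: "v \<noteq> 0\<^sub>v n" and Av: "?Ac *\<^sub>v v = z \<cdot>\<^sub>v v"
    unfolding eigenvector_def using Ac by auto
  define s where "s = (\<Sum>i\<in>{0..<n}. \<Sum>j\<in>{0..<n}. cnj (v $ i) * of_real (A $$ (i,j)) * v $ j)"
  define r where "r = (\<Sum>i\<in>{0..<n}. cnj (v $ i) * v $ i)"
  have "s = (\<Sum>i\<in>{0..<n}. cnj (v $ i) * (?Ac *\<^sub>v v) $ i)"
    unfolding s_def using A v by (simp add: scalar_prod_def sum_distrib_left mult.assoc)
  also have "\<dots> = z * r" unfolding Av r_def using v by (simp add: sum_distrib_left algebra_simps)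
  finally have szr: "s = z * r" .
  have "cnj s = (\<Sum>i\<in>{0..<n}. \<Sum>j\<in>{0..<n}. v $ i * of_real (A $$ (i,j)) * cnj (v $ j))"
    unfolding s_def by simp
  also have "\<dots> = (\<Sum>j\<in>{0..<n}. \<Sum>i\<in>{0..<n}. v $ i * of_real (A $$ (i,j)) * cnj (v $ j))"
    by (rule sum.swap)
  also have "\<dots> = s" unfolding s_def
  proof (intro sum.cong refl)
    fix j i assume "j \<in> {0..<n}" "i \<in> {0..<n}"
    hence "A $$ (i,j) = A $$ (j,i)" using A sym by (metis atLeastLessThan_iff carrier_matD index_transpose_mat(1) zero_le)
    thus "v $ i * of_real (A $$ (i,j)) * cnj (v $ j) = cnj (v $ j) * of_real (A $$ (j,i)) * v $ i"
      by simp
  qed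
  finally have cs: "cnj s = s" .
  have rreal: "r = of_real (\<Sum>i\<in>{0..<n}. (cmod (v $ i))^2)"
    unfolding r_def of_real_sum of_real_power
    by (intro sum.cong refl) (subst of_real_power[symmetric], subst complex_norm_square, simp add: mult.commute)
  from v0 v obtain i where i: "i < n" "v $ i \<noteq> 0" by (metis carrier_vecD eq_vecI index_zero_vec(1) index_zero_vec(2))
  have "0 < (\<Sum>i\<in>{0..<n}. (cmod (v $ i))^2)"
    by (rule sum_pos2[of _ i], use i in auto)
  hence r0: "r \<noteq> 0" unfolding rreal by (metis of_real_eq_0_iff less_irrefl)
  have cr: "cnj r = r" unfolding rreal by (rule complex_cnj_complex_of_real)
  have "cnj z * r = z * r" using cs szr cr by (metis complex_cnj_mult)
  hence "cnj z = z" using r0 by simp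
  hence zr: "z = of_real (Re z)" by (metis Reals_cnj_iff of_real_Re)
  have "of_real (poly (char_poly A) (Re z)) = (0::complex)"
    using z unfolding cp by (subst (asm) zr, simp only: of_real_hom.poly_map_poly)
  hence "poly (char_poly A) (Re z) = 0" by simp
  hence "eigenvalue A (Re z)" using eigenvalue_root_char_poly[OF A] by simp
  then obtain w where "eigenvector A w (Re z)" unfolding eigenvalue_def by auto
  thus ?thesis unfolding eigenvector_def using A by auto
qed

lemma self_scalar_pos:
  fixes v :: "real vec"
  assumes v: "v \<in> carrier_vec n" and v0: "v \<noteq> 0\<^sub>v n"
  shows "0 < v \<bullet> v"
proof -
  from v0 v obtain i where i: "i < n" "v $ i \<noteq> 0" by (metis carrier_vecD eq_vecI index_zero_vec(1) index_zero_vec(2))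
  have "v \<bullet> v = (\<Sum>l\<in>{0..<n}. (v $ l)^2)" using v unfolding scalar_prod_def by (simp add: power2_eq_square)
  also have "\<dots> > 0" by (rule sum_pos2[of _ i], use i in auto)
  finally show ?thesis .
qed

lemma spectral:
  fixes A :: "real mat"
  assumes "A \<in> carrier_mat n n" "transpose_mat A = A"
  shows "\<exists>Q d. Q \<in> carrier_mat n n \<and> transpose_mat Q * Q = 1\<^sub>m n \<and> A = Q * dmat n d * transpose_mat Q"
  using assms
proof (induction n arbitrary: A)
  case 0
  then show ?case by (intro exI[of _ "1\<^sub>m 0"] exI[of _ "\<lambda>_. 0"], auto intro!: eq_matI)
next
  case (Suc m)
  note A = Suc.prems(1) and sym = Suc.prems(2)
  from real_sym_eigen[OF A sym] obtain lam v0 where v0: "v0 \<in> carrier_vec (Suc m)" "v0 \<noteq> 0\<^sub>v (Suc m)"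
    and Av0: "A *\<^sub>v v0 = lam \<cdot>\<^sub>v v0" by auto
  define v where "v = (1 / sqrt (v0 \<bullet> v0)) \<cdot>\<^sub>v v0"
  have pos: "0 < v0 \<bullet> v0" by (rule self_scalar_pos[OF v0])
  have v: "v \<in> carrier_vec (Suc m)" unfolding v_def using v0 by simp
  have vv: "v \<bullet> v = 1" unfolding v_def using v0 pos
    by (simp add: scalar_prod_smult_left scalar_prod_smult_right)
  have Av: "A *\<^sub>v v = lam \<cdot>\<^sub>v v" unfolding v_def using A v0 Av0
    by (simp add: mult_mat_vec smult_smult_assoc mult.commute)
  from householder[OF v vv] obtain W where W: "W \<in> carrier_mat (Suc m) (Suc m)"
    and WW: "transpose_mat W * W = 1\<^sub>m (Suc m)" and We: "W *\<^sub>v unit_vec (Suc m) 0 = v" by auto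
  have Wt: "transpose_mat W \<in> carrier_mat (Suc m) (Suc m)" using W by simp
  have WWt: "W * transpose_mat W = 1\<^sub>m (Suc m)" by (rule mat_mult_left_right_inverse[OF Wt W WW])
  define A' where "A' = transpose_mat W * A * W"
  have A': "A' \<in> carrier_mat (Suc m) (Suc m)" unfolding A'_def using W A by simp
  have symA': "transpose_mat A' = A'"
  proof -
    have "transpose_mat A' = transpose_mat W * transpose_mat (transpose_mat W * A)"
      unfolding A'_def by (rule transpose_mult) (use W A in auto)
    also have "transpose_mat (transpose_mat W * A) = transpose_mat A * W"
      using transpose_mult[of "transpose_mat W" "Suc m" "Suc m" A "Suc m"] W A by simp
    finally show ?thesis unfolding A'_def sym using W A by (simp add: assoc_mult_mat[of _ "Suc m" "Suc m" _ "Suc m" _ "Suc m"])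
  qed
  have A'e: "A' *\<^sub>v unit_vec (Suc m) 0 = lam \<cdot>\<^sub>v unit_vec (Suc m) 0"
  proof -
    have "A' *\<^sub>v unit_vec (Suc m) 0 = transpose_mat W *\<^sub>v (A *\<^sub>v (W *\<^sub>v unit_vec (Suc m) 0))"
      unfolding A'_def using W A by (simp add: assoc_mult_mat_vec[of _ "Suc m" "Suc m" _ "Suc m"])
    also have "\<dots> = lam \<cdot>\<^sub>v (transpose_mat W *\<^sub>v (W *\<^sub>v unit_vec (Suc m) 0))"
      unfolding We Av using Wt v by (simp add: mult_mat_vec)
    also have "transpose_mat W *\<^sub>v (W *\<^sub>v unit_vec (Suc m) 0) = unit_vec (Suc m) 0"
      using W Wt by (simp add: assoc_mult_mat_vec[of _ "Suc m" "Suc m" _ "Suc m", symmetric] WW)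
    finally show ?thesis .
  qed
  have col0: "A' $$ (i, 0) = (if i = 0 then lam else 0)" if i: "i < Suc m" for i
  proof -
    have "(A' *\<^sub>v unit_vec (Suc m) 0) $ i = A' $$ (i, 0)"
      using A' i by (simp add: scalar_prod_right_unit)
    thus ?thesis unfolding A'e using i by (cases "i = 0") (auto simp: unit_vec_def)
  qed
  have row0: "A' $$ (0, j) = (if j = 0 then lam else 0)" if j: "j < Suc m" for j
  proof -
    have "A' $$ (0, j) = transpose_mat A' $$ (j, 0)" using A' j by simp
    thus ?thesis unfolding symA' using col0[OF j] by simp
  qed
  define A3 where "A3 = mat m m (\<lambda>(i,j). A' $$ (Suc i, Suc j))"
  have A3: "A3 \<in> carrier_mat m m" unfolding A3_def by simp
  have symA3: "transpose_mat A3 = A3"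
  proof (rule eq_matI)
    fix i j assume "i < dim_row A3" "j < dim_col A3"
    hence ij: "i < m" "j < m" unfolding A3_def by auto
    have "A' $$ (Suc j, Suc i) = transpose_mat A' $$ (Suc i, Suc j)" using A' ij by simp
    thus "transpose_mat A3 $$ (i, j) = A3 $$ (i, j)" unfolding A3_def symA' using ij by simp
  qed (auto simp: A3_def)
  from Suc.IH[OF A3 symA3] obtain Q3 d3 where Q3: "Q3 \<in> carrier_mat m m"
    and Q3Q3: "transpose_mat Q3 * Q3 = 1\<^sub>m m" and A3eq: "A3 = Q3 * dmat m d3 * transpose_mat Q3" by auto
  define L where "L = mat 1 1 (\<lambda>_. lam)"
  have L: "L \<in> carrier_mat 1 1" unfolding L_def by simp
  define B where "B = four_block_mat (1\<^sub>m 1) (0\<^sub>m 1 m) (0\<^sub>m m 1) Q3"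
  have B: "B \<in> carrier_mat (Suc m) (Suc m)" unfolding B_def using Q3 by auto
  have Bt: "transpose_mat B = four_block_mat (1\<^sub>m 1) (0\<^sub>m 1 m) (0\<^sub>m m 1) (transpose_mat Q3)"
    unfolding B_def by (subst transpose_four_block_mat[of _ 1 1 _ m _ m]) (use Q3 in auto)
  define d where "d i = (if i = 0 then lam else d3 (i - 1))" for i
  have D: "dmat (Suc m) d = four_block_mat L (0\<^sub>m 1 m) (0\<^sub>m m 1) (dmat m d3)"
    by (rule eq_matI, auto simp: L_def d_def)
  have z: "0\<^sub>m m m + Q3 * dmat m d3 * transpose_mat Q3 = Q3 * dmat m d3 * transpose_mat Q3"
    using Q3 by (intro left_add_zero_mat mult_carrier_mat[of _ m m]) auto
  have "B * dmat (Suc m) d * transpose_mat B =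
     four_block_mat L (0\<^sub>m 1 m) (0\<^sub>m m 1) (Q3 * dmat m d3 * transpose_mat Q3)"
    unfolding D Bt unfolding B_def using L Q3
    by (simp add: z  mult_four_block_mat[of _ 1 1 _ m _ m _ _ 1 _ m])
  also have "\<dots> = A'"
    unfolding A3eq[symmetric]
  proof (rule eq_matI)
    fix i j assume ij: "i < dim_row A'" "j < dim_col A'"
    show "four_block_mat L (0\<^sub>m 1 m) (0\<^sub>m m 1) A3 $$ (i, j) = A' $$ (i, j)"
      using ij A' A3 L col0 row0 unfolding A3_def L_def
      by (cases i; cases j; auto)
  qed (use A' A3 L in auto)
  finally have A'eq: "A' = B * dmat (Suc m) d * transpose_mat B" by simp
  define Q where "Q = W * B"
  have Q: "Q \<in> carrier_mat (Suc m) (Suc m)" unfolding Q_def using W B by simp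
  have Qt: "transpose_mat Q = transpose_mat B * transpose_mat W"
    unfolding Q_def using W B by (simp add: transpose_mult)
  have BtB: "transpose_mat B * B = 1\<^sub>m (Suc m)"
  proof -
    have "transpose_mat B * B = four_block_mat (1\<^sub>m 1) (0\<^sub>m 1 m) (0\<^sub>m m 1) (transpose_mat Q3 * Q3)"
      unfolding Bt unfolding B_def using Q3 by (simp add: mult_four_block_mat[of _ 1 1 _ m _ m _ _ 1 _ m])
    also have "\<dots> = 1\<^sub>m (Suc m)" unfolding Q3Q3 by (rule eq_matI, auto)
    finally show ?thesis .
  qed
  have "transpose_mat Q * Q = transpose_mat B * (transpose_mat W * W) * B"
    unfolding Qt unfolding Q_def using W B by (simp add: assoc_mult_mat[of _ "Suc m" "Suc m" _ "Suc m" _ "Suc m"])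
  also have "\<dots> = 1\<^sub>m (Suc m)" unfolding WW using B BtB by simp
  finally have QQ: "transpose_mat Q * Q = 1\<^sub>m (Suc m)" .
  have "A = (W * transpose_mat W) * A * (W * transpose_mat W)" unfolding WWt using A by simp
  also have "\<dots> = W * A' * transpose_mat W"
    unfolding A'_def using W A by (simp add: assoc_mult_mat[of _ "Suc m" "Suc m" _ "Suc m" _ "Suc m"])
  also have "\<dots> = Q * dmat (Suc m) (d) * transpose_mat Q"
    unfolding A'eq Qt unfolding Q_def using W B by (simp add: assoc_mult_mat[of _ "Suc m" "Suc m" _ "Suc m" _ "Suc m"] carrier_matD mult_carrier_dims)
  finally have Aeq: "A = Q * dmat (Suc m) d * transpose_mat Q" .
  show ?case by (rule exI[of _ Q], rule exI[of _ d], intro conjI, fact Q, fact QQ, fact Aeq)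
qed

lemma supp_scalar_zero:
  fixes y x :: "real vec"
  assumes y: "y \<in> carrier_vec n" and x: "x \<in> carrier_vec n"
    and h: "\<And>j. j < n \<Longrightarrow> y $ j = 0 \<or> x $ j = 0"
  shows "y \<bullet> x = 0"
  unfolding scalar_prod_def using x h by (intro sum.neutral) auto

lemma kernel_exists:
  fixes g :: "nat \<Rightarrow> real vec"
  assumes "finite I" "J \<subseteq> {..<n}" "card I < card J" "\<forall>i\<in>I. g i \<in> carrier_vec n"
  shows "\<exists>x \<in> carrier_vec n. x \<noteq> 0\<^sub>v n \<and> (\<forall>j<n. j \<notin> J \<longrightarrow> x $ j = 0) \<and> (\<forall>i\<in>I. g i \<bullet> x = 0)"
  using assms
proof (induction I arbitrary: J g rule: finite_induct)
  case empty
  then have "J \<noteq> {}" by auto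
  then obtain j where j: "j \<in> J" by auto
  with empty have jn: "j < n" by auto
  have nz: "unit_vec n j \<noteq> (0\<^sub>v n :: real vec)"
  proof
    assume "unit_vec n j = (0\<^sub>v n :: real vec)"
    then have "(unit_vec n j :: real vec) $ j = (0\<^sub>v n :: real vec) $ j" by simp
    thus False using jn by simp
  qed
  show ?case
    by (rule bexI[of _ "unit_vec n j"], use j jn nz in \<open>auto simp: unit_vec_def\<close>)
next
  case (insert i I)
  note JJ = insert.prems(1) and cardJ = insert.prems(2) and gc = insert.prems(3)
  have gi: "g i \<in> carrier_vec n" using gc by auto
  have finJ: "finite J" using JJ finite_subset by blast
  show ?case
  proof (cases "\<forall>j\<in>J. g i $ j = 0")
    case True
    have "card I < card J" using cardJ insert.hyps by simp
    from insert.IH[OF JJ this, of g] gc obtain x where x: "x \<in> carrier_vec n" "x \<noteq> 0\<^sub>v n"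
      "\<forall>j<n. j \<notin> J \<longrightarrow> x $ j = 0" "\<forall>i\<in>I. g i \<bullet> x = 0" by auto
    have "g i \<bullet> x = 0" by (rule supp_scalar_zero[OF gi x(1)], use True x(3) in auto)
    thus ?thesis using x by auto
  next
    case False
    then obtain j0 where j0: "j0 \<in> J" and c0: "g i $ j0 \<noteq> 0" by auto
    define c where "c = g i $ j0"
    have j0n: "j0 < n" using j0 JJ by auto
    define J' where "J' = J - {j0}"
    have JJ': "J' \<subseteq> {..<n}" using JJ unfolding J'_def by auto
    have cJ': "card J' = card J - 1" unfolding J'_def using j0 finJ by simp
    have "card I < card J'" using cardJ insert.hyps cJ' by simp
    define g' where "g' l = g l - ((g l $ j0) / c) \<cdot>\<^sub>v g i" for l
    have g'c: "\<forall>l\<in>I. g' l \<in> carrier_vec n" using gc gi unfolding g'_def by auto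
    from insert.IH[OF JJ' \<open>card I < card J'\<close> g'c] obtain x' where x': "x' \<in> carrier_vec n" "x' \<noteq> 0\<^sub>v n"
      "\<forall>j<n. j \<notin> J' \<longrightarrow> x' $ j = 0" "\<forall>l\<in>I. g' l \<bullet> x' = 0" by auto
    define x where "x = x' - ((g i \<bullet> x') / c) \<cdot>\<^sub>v unit_vec n j0"
    have x: "x \<in> carrier_vec n" unfolding x_def using x' by simp
    have xj: "x $ j = x' $ j - (if j = j0 then (g i \<bullet> x') / c else 0)" if "j < n" for j
      unfolding x_def using x' that by (simp add: unit_vec_def)
    have supp: "\<forall>j<n. j \<notin> J \<longrightarrow> x $ j = 0"
      using xj x'(3) j0 unfolding J'_def by auto
    have nz: "x \<noteq> 0\<^sub>v n"
    proof
      assume "x = 0\<^sub>v n"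
      from x'(2) x'(1) obtain j where j: "j < n" "x' $ j \<noteq> 0"
        by (metis carrier_vecD eq_vecI index_zero_vec(1) index_zero_vec(2))
      have "j \<in> J'" using x'(3) j by auto
      hence "j \<noteq> j0" unfolding J'_def by auto
      hence "x $ j = x' $ j" using xj j by simp
      with \<open>x = 0\<^sub>v n\<close> j show False by simp
    qed
    have sp: "h \<bullet> x = h \<bullet> x' - ((g i \<bullet> x') / c) * (h $ j0)" if h: "h \<in> carrier_vec n" for h
      unfolding x_def using h x' j0n
      by (simp add: scalar_prod_minus_distrib[of _ n] scalar_prod_smult_right scalar_prod_right_unit)
    have "g i \<bullet> x = 0" using sp[OF gi] c0 unfolding c_def by simp
    moreover have "g l \<bullet> x = 0" if l: "l \<in> I" for l
    proof -
      have gl: "g l \<in> carrier_vec n" using gc l by auto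
      have "g' l \<bullet> x' = g l \<bullet> x' - ((g l $ j0) / c) * (g i \<bullet> x')"
        unfolding g'_def using gl gi x'(1)
        by (simp add: minus_scalar_prod_distrib[of _ n] scalar_prod_smult_left)
      thus ?thesis using sp[OF gl] x'(4) l by (simp add: field_simps)
    qed
    ultimately show ?thesis using x supp nz by auto
  qed
qed

lemma qf_dmat:
  fixes x :: "real vec"
  assumes x: "x \<in> carrier_vec n"
  shows "x \<bullet> (dmat n d *\<^sub>v x) = (\<Sum>i\<in>{0..<n}. d i * (x $ i)^2)"
proof -
  have "(dmat n d *\<^sub>v x) $ i = d i * x $ i" if i: "i < n" for i
    using x i unfolding dmat_def
    by (simp add: scalar_prod_def if_distrib[of "\<lambda>a. a * _"] cong: if_cong)
  thus ?thesis unfolding scalar_prod_def using x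
    by (intro sum.cong, auto simp: power2_eq_square)
qed

lemma qf_congr:
  fixes S A :: "real mat"
  assumes S: "S \<in> carrier_mat n n" and A: "A \<in> carrier_mat n n" and x: "x \<in> carrier_vec n"
  shows "x \<bullet> ((transpose_mat S * A * S) *\<^sub>v x) = (S *\<^sub>v x) \<bullet> (A *\<^sub>v (S *\<^sub>v x))"
proof -
  have "(transpose_mat S * A * S) *\<^sub>v x = transpose_mat S *\<^sub>v (A *\<^sub>v (S *\<^sub>v x))"
    using S A x by (simp add: assoc_mult_mat_vec[of _ n n _ n])
  hence "x \<bullet> ((transpose_mat S * A * S) *\<^sub>v x) = (transpose_mat S *\<^sub>v (A *\<^sub>v (S *\<^sub>v x))) \<bullet> x"
    using S A x by (simp add: comm_scalar_prod[of _ n])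
  also have "\<dots> = (A *\<^sub>v (S *\<^sub>v x)) \<bullet> (S *\<^sub>v x)"
    by (rule transpose_vec_mult_scalar[OF S x], use S A x in simp)
  also have "\<dots> = (S *\<^sub>v x) \<bullet> (A *\<^sub>v (S *\<^sub>v x))"
    using S A x by (simp add: comm_scalar_prod[of _ n])
  finally show ?thesis .
qed

lemma diag_sylvester:
  fixes M :: "real mat"
  assumes M: "M \<in> carrier_mat n n" and eq: "dmat n e = transpose_mat M * dmat n d * M"
  shows "card {i. i < n \<and> e i < 0} \<le> card {i. i < n \<and> d i < 0}"
proof (rule ccontr)
  assume "\<not> ?thesis"
  hence lt: "card {i. i < n \<and> d i < 0} < card {i. i < n \<and> e i < 0}" by simp
  have "\<exists>x \<in> carrier_vec n. x \<noteq> 0\<^sub>v n \<and> (\<forall>j<n. j \<notin> {i. i < n \<and> e i < 0} \<longrightarrow> x $ j = 0)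
     \<and> (\<forall>i\<in>{i. i < n \<and> d i < 0}. row M i \<bullet> x = 0)"
    by (rule kernel_exists[OF _ _ lt], use M in auto)
  then obtain x where x: "x \<in> carrier_vec n" "x \<noteq> 0\<^sub>v n"
    and supp: "\<And>j. j < n \<Longrightarrow> \<not> e j < 0 \<Longrightarrow> x $ j = 0"
    and ker: "\<And>i. i < n \<Longrightarrow> d i < 0 \<Longrightarrow> row M i \<bullet> x = 0" by auto
  from x obtain j where j: "j < n" "x $ j \<noteq> 0"
    by (metis carrier_vecD eq_vecI index_zero_vec(1) index_zero_vec(2))
  have ej: "e j < 0" using supp j by auto
  have "(\<Sum>i\<in>{0..<n}. e i * (x $ i)^2) < 0"
  proof -
    have "0 < (\<Sum>i\<in>{0..<n}. - (e i * (x $ i)^2))"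
    proof (rule sum_pos2[of _ j])
      show "0 < - (e j * (x $ j)^2)" using ej j by (simp add: mult_neg_pos)
      fix i assume "i \<in> {0..<n}"
      thus "0 \<le> - (e i * (x $ i)^2)" using supp[of i] by (cases "e i < 0") (auto simp: mult_nonpos_nonneg)
    qed (use j in auto)
    thus ?thesis by (simp add: sum_negf)
  qed
  moreover have "(\<Sum>i\<in>{0..<n}. e i * (x $ i)^2) = (\<Sum>i\<in>{0..<n}. d i * ((M *\<^sub>v x) $ i)^2)"
    using qf_dmat[OF x(1), of e] qf_congr[OF M dmat_carrier x(1), of d] qf_dmat[of "M *\<^sub>v x" n d] M x
    unfolding eq by simp
  moreover have "0 \<le> (\<Sum>i\<in>{0..<n}. d i * ((M *\<^sub>v x) $ i)^2)"
  proof (rule sum_nonneg)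
    fix i assume i: "i \<in> {0..<n}"
    show "0 \<le> d i * ((M *\<^sub>v x) $ i)^2"
    proof (cases "d i < 0")
      case True
      then have "(M *\<^sub>v x) $ i = 0" using ker[of i] i M by simp
      then show ?thesis by simp
    qed simp
  qed
  ultimately show False by simp
qed

lemma spectral_inertia:
  fixes A Q :: "real mat"
  assumes Q: "Q \<in> carrier_mat n n" and QQ: "transpose_mat Q * Q = 1\<^sub>m n"
    and A: "A = Q * dmat n d * transpose_mat Q"
  shows "neg_inertia A = card {i. i < n \<and> d i < 0}"
proof -
  have Qt: "transpose_mat Q \<in> carrier_mat n n" using Q by simp
  have QQ': "Q * transpose_mat Q = 1\<^sub>m n" by (rule mat_mult_left_right_inverse[OF Qt Q QQ])
  have "similar_mat A (dmat n d)"
    by (rule similar_matI[of _ _ Q "transpose_mat Q" n], use Q A QQ QQ' in auto)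
  thus ?thesis using neg_inertia_similar neg_inertia_dmat by metis
qed

lemma sylvester_le:
  fixes A S :: "real mat"
  assumes A: "A \<in> carrier_mat n n" and sym: "transpose_mat A = A" and S: "S \<in> carrier_mat n n"
  shows "neg_inertia (transpose_mat S * A * S) \<le> neg_inertia A"
proof -
  let ?B = "transpose_mat S * A * S"
  have St: "transpose_mat S \<in> carrier_mat n n" using S by simp
  have B: "?B \<in> carrier_mat n n" using S A by simp
  have symB: "transpose_mat ?B = ?B"
  proof -
    have "transpose_mat ?B = transpose_mat S * transpose_mat (transpose_mat S * A)"
      by (rule transpose_mult) (use S A in auto)
    also have "transpose_mat (transpose_mat S * A) = transpose_mat A * S"
      using transpose_mult[of "transpose_mat S" n n A n] S A by simp
    finally show ?thesis unfolding sym using S A by (simp add: assoc_mult_mat[of _ n n _ n _ n])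
  qed
  obtain Q d where Q: "Q \<in> carrier_mat n n" and QQ: "transpose_mat Q * Q = 1\<^sub>m n"
    and Aeq: "A = Q * dmat n d * transpose_mat Q" using spectral[OF A sym] by auto
  obtain P e where P: "P \<in> carrier_mat n n" and PP: "transpose_mat P * P = 1\<^sub>m n"
    and Beq: "?B = P * dmat n e * transpose_mat P" using spectral[OF B symB] by auto
  have Qt: "transpose_mat Q \<in> carrier_mat n n" using Q by simp
  have Pt: "transpose_mat P \<in> carrier_mat n n" using P by simp
  define M where "M = transpose_mat Q * S * P"
  have M: "M \<in> carrier_mat n n" unfolding M_def using Q S P by simp
  have Mt: "transpose_mat M = transpose_mat P * transpose_mat S * Q"
  proof -
    have "transpose_mat M = transpose_mat P * transpose_mat (transpose_mat Q * S)"
      unfolding M_def by (rule transpose_mult) (use Q S P in auto)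
    also have "transpose_mat (transpose_mat Q * S) = transpose_mat S * Q"
      using transpose_mult[of "transpose_mat Q" n n S n] Q S by simp
    finally show ?thesis using P S Q by (simp add: assoc_mult_mat[of _ n n _ n _ n])
  qed
  have "dmat n e = (transpose_mat P * P) * dmat n e * (transpose_mat P * P)"
    unfolding PP by simp
  also have "\<dots> = transpose_mat P * ?B * P"
    unfolding Beq using P Pt by (simp add: assoc_mult_mat[of _ n n _ n _ n] mult_carrier_dims carrier_matD)
  also have "\<dots> = transpose_mat M * dmat n d * M"
    unfolding Mt unfolding M_def Aeq using P Pt S St Q Qt
    by (simp add: assoc_mult_mat[of _ n n _ n _ n] mult_carrier_dims carrier_matD)
  finally have "dmat n e = transpose_mat M * dmat n d * M" .
  from diag_sylvester[OF M this]
  show ?thesis using spectral_inertia[OF Q QQ Aeq] spectral_inertia[OF P PP Beq] by simp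
qed

lemma sylvester_eq:
  fixes A S R :: "real mat"
  assumes A: "A \<in> carrier_mat n n" and sym: "transpose_mat A = A" and S: "S \<in> carrier_mat n n"
    and R: "R \<in> carrier_mat n n" and SR: "S * R = 1\<^sub>m n"
  shows "neg_inertia (transpose_mat S * A * S) = neg_inertia A"
proof -
  let ?B = "transpose_mat S * A * S"
  have B: "?B \<in> carrier_mat n n" using S A by simp
  have symB: "transpose_mat ?B = ?B"
  proof -
    have "transpose_mat ?B = transpose_mat S * transpose_mat (transpose_mat S * A)"
      by (rule transpose_mult) (use S A in auto)
    also have "transpose_mat (transpose_mat S * A) = transpose_mat A * S"
      using transpose_mult[of "transpose_mat S" n n A n] S A by simp
    finally show ?thesis unfolding sym using S A by (simp add: assoc_mult_mat[of _ n n _ n _ n])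
  qed
  have St: "transpose_mat S \<in> carrier_mat n n" using S by simp
  have Rt: "transpose_mat R \<in> carrier_mat n n" using R by simp
  have RS: "transpose_mat R * transpose_mat S = 1\<^sub>m n"
    using transpose_mult[of S n n R n] S R SR by simp
  have "transpose_mat R * ?B * R = (transpose_mat R * transpose_mat S) * A * (S * R)"
    using R Rt S St A by (simp add: assoc_mult_mat[of _ n n _ n _ n] mult_carrier_dims carrier_matD)
  also have "\<dots> = A" unfolding RS SR using A by simp
  finally have "neg_inertia A = neg_inertia (transpose_mat R * ?B * R)" by simp
  also have "\<dots> \<le> neg_inertia ?B" by (rule sylvester_le[OF B symB R])
  finally show ?thesis using sylvester_le[OF A sym S] by simp
qed

lemma neg_inertia_block:
  fixes A B :: "real mat"
  assumes A: "A \<in> carrier_mat m m" and symA: "transpose_mat A = A"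
    and B: "B \<in> carrier_mat p p" and symB: "transpose_mat B = B"
  shows "neg_inertia (four_block_mat A (0\<^sub>m m p) (0\<^sub>m p m) B) = neg_inertia A + neg_inertia B"
proof -
  obtain Q1 d1 where Q1: "Q1 \<in> carrier_mat m m" and QQ1: "transpose_mat Q1 * Q1 = 1\<^sub>m m"
    and Aeq: "A = Q1 * dmat m d1 * transpose_mat Q1" using spectral[OF A symA] by auto
  obtain Q2 d2 where Q2: "Q2 \<in> carrier_mat p p" and QQ2: "transpose_mat Q2 * Q2 = 1\<^sub>m p"
    and Beq: "B = Q2 * dmat p d2 * transpose_mat Q2" using spectral[OF B symB] by auto
  define Q where "Q = four_block_mat Q1 (0\<^sub>m m p) (0\<^sub>m p m) Q2"
  define d where "d i = (if i < m then d1 i else d2 (i - m))" for i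
  have Q: "Q \<in> carrier_mat (m+p) (m+p)" unfolding Q_def using Q1 Q2 by simp
  have Qt: "transpose_mat Q = four_block_mat (transpose_mat Q1) (0\<^sub>m m p) (0\<^sub>m p m) (transpose_mat Q2)"
    unfolding Q_def by (subst transpose_four_block_mat[of _ m m _ p _ p]) (use Q1 Q2 in auto)
  have D: "dmat (m+p) d = four_block_mat (dmat m d1) (0\<^sub>m m p) (0\<^sub>m p m) (dmat p d2)"
    by (rule eq_matI, auto simp: d_def)
  have QQ: "transpose_mat Q * Q = 1\<^sub>m (m+p)"
  proof -
    have "transpose_mat Q * Q = four_block_mat (transpose_mat Q1 * Q1) (0\<^sub>m m p) (0\<^sub>m p m) (transpose_mat Q2 * Q2)"
      unfolding Qt unfolding Q_def using Q1 Q2 by (simp add: mult_four_block_mat[of _ m m _ p _ p _ _ m _ p])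
    also have "\<dots> = 1\<^sub>m (m+p)" unfolding QQ1 QQ2 by (rule eq_matI, auto)
    finally show ?thesis .
  qed
  have z1: "Q1 * dmat m d1 * transpose_mat Q1 + 0\<^sub>m m m = Q1 * dmat m d1 * transpose_mat Q1"
    using Q1 by (intro right_add_zero_mat mult_carrier_mat[of _ m m]) auto
  have z2: "0\<^sub>m p p + Q2 * dmat p d2 * transpose_mat Q2 = Q2 * dmat p d2 * transpose_mat Q2"
    using Q2 by (intro left_add_zero_mat mult_carrier_mat[of _ p p]) auto
  have eq: "four_block_mat A (0\<^sub>m m p) (0\<^sub>m p m) B = Q * dmat (m+p) d * transpose_mat Q"
    unfolding D Qt unfolding Q_def Aeq Beq using Q1 Q2
    by (simp add: mult_four_block_mat[of _ m m _ p _ p _ _ m _ p] z1 z2)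
  have "neg_inertia (four_block_mat A (0\<^sub>m m p) (0\<^sub>m p m) B) = card {i. i < m + p \<and> d i < 0}"
    by (rule spectral_inertia[OF Q QQ eq])
  also have "{i. i < m + p \<and> d i < 0} = {i. i < m \<and> d1 i < 0} \<union> (\<lambda>i. i + m) ` {i. i < p \<and> d2 i < 0}"
    (is "_ = ?X \<union> ?Y")
  proof (intro equalityI subsetI)
    fix x assume "x \<in> {i. i < m + p \<and> d i < 0}"
    thus "x \<in> ?X \<union> ?Y" unfolding d_def
      by (cases "x < m") (auto simp: image_iff intro!: exI[of _ "x - m"])
  next
    fix x assume "x \<in> ?X \<union> ?Y"
    thus "x \<in> {i. i < m + p \<and> d i < 0}" by (auto simp: d_def)
  qed
  also have "card (?X \<union> ?Y) = card ?X + card ?Y" by (rule card_Un_disjoint) auto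
  also have "card ?Y = card {i. i < p \<and> d2 i < 0}" by (rule card_image) (auto simp: inj_on_def)
  finally show ?thesis
    using spectral_inertia[OF Q1 QQ1 Aeq] spectral_inertia[OF Q2 QQ2 Beq] by simp
qed

lemma neg_inertia_negdef:
  fixes B :: "real mat"
  assumes B: "B \<in> carrier_mat p p" and symB: "transpose_mat B = B"
    and nd: "\<And>y. y \<in> carrier_vec p \<Longrightarrow> y \<noteq> 0\<^sub>v p \<Longrightarrow> y \<bullet> (B *\<^sub>v y) < 0"
  shows "neg_inertia B = p"
proof -
  obtain Q d where Q: "Q \<in> carrier_mat p p" and QQ: "transpose_mat Q * Q = 1\<^sub>m p"
    and Beq: "B = Q * dmat p d * transpose_mat Q" using spectral[OF B symB] by auto
  have Qt: "transpose_mat Q \<in> carrier_mat p p" using Q by simp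
  have "dmat p d = (transpose_mat Q * Q) * dmat p d * (transpose_mat Q * Q)" unfolding QQ by simp
  also have "\<dots> = transpose_mat Q * B * Q" unfolding Beq using Q Qt
    by (simp add: assoc_mult_mat[of _ p p _ p _ p] mult_carrier_dims carrier_matD)
  finally have D: "dmat p d = transpose_mat Q * B * Q" .
  have "d i < 0" if i: "i < p" for i
  proof -
    let ?u = "unit_vec p i :: real vec"
    have u: "?u \<in> carrier_vec p" by simp
    have "?u \<bullet> (dmat p d *\<^sub>v ?u) = (\<Sum>l\<in>{0..<p}. d l * (?u $ l)^2)" by (rule qf_dmat[OF u])
    also have "\<dots> = (\<Sum>l\<in>{0..<p}. if l = i then d l else 0)"
      by (intro sum.cong) (auto simp: unit_vec_def)
    also have "\<dots> = d i" using i by simp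
    finally have 1: "?u \<bullet> (dmat p d *\<^sub>v ?u) = d i" .
    have 2: "?u \<bullet> (dmat p d *\<^sub>v ?u) = (Q *\<^sub>v ?u) \<bullet> (B *\<^sub>v (Q *\<^sub>v ?u))"
      unfolding D by (rule qf_congr[OF Q B u])
    have "Q *\<^sub>v ?u \<noteq> 0\<^sub>v p"
    proof
      assume "Q *\<^sub>v ?u = 0\<^sub>v p"
      moreover have "transpose_mat Q *\<^sub>v 0\<^sub>v p = (0\<^sub>v p :: real vec)" using Qt by (intro eq_vecI) auto
      ultimately have "transpose_mat Q *\<^sub>v (Q *\<^sub>v ?u) = 0\<^sub>v p" by simp
      hence "(transpose_mat Q * Q) *\<^sub>v ?u = 0\<^sub>v p" using Q Qt by (simp add: assoc_mult_mat_vec[of _ p p _ p])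
      hence "?u = 0\<^sub>v p" unfolding QQ by simp
      hence "?u $ i = (0\<^sub>v p :: real vec) $ i" by simp
      thus False using i by simp
    qed
    from nd[OF _ this] Q have "(Q *\<^sub>v ?u) \<bullet> (B *\<^sub>v (Q *\<^sub>v ?u)) < 0" by simp
    thus ?thesis using 1 2 by simp
  qed
  hence "{i. i < p \<and> d i < 0} = {..<p}" by auto
  thus ?thesis using spectral_inertia[OF Q QQ Beq] by simp
qed

definition sfun :: "nat \<Rightarrow> nat \<Rightarrow> nat \<Rightarrow> nat \<Rightarrow> real" where
  "sfun n k r l = (if l < n then (if r = l then 1 else 0) else if l = n then (if n \<le> r then 1 / real k else 0)
     else (if r = l then 1 else 0) - (if r = n then 1 else 0))"

definition rfun :: "nat \<Rightarrow> nat \<Rightarrow> nat \<Rightarrow> nat \<Rightarrow> real" where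
  "rfun n k r l = (if l < n then (if r = l then 1 else 0) else
     (if r = n then 1 else 0) + (if r = l \<and> l \<noteq> n then 1 else 0) - (if n < r then 1 / real k else 0))"

lemma sum_split_pend:
  fixes g :: "nat \<Rightarrow> real"
  shows "(\<Sum>r\<in>{0..<n+k}. g r) = (\<Sum>r\<in>{0..<n}. g r) + (\<Sum>r\<in>{n..<n+k}. g r)"
  by (rule sum.atLeastLessThan_concat[symmetric]) auto

lemma sum_sfun:
  fixes g :: "nat \<Rightarrow> real"
  assumes c: "c < n + k"
  shows "(\<Sum>r\<in>{0..<n+k}. sfun n k r c * g r) =
    (if c < n then g c else if c = n then (\<Sum>r\<in>{n..<n+k}. g r) / real k else g c - g n)"
proof (cases "c < n")
  case True
  then have "(\<Sum>r\<in>{0..<n+k}. sfun n k r c * g r) = (\<Sum>r\<in>{0..<n+k}. if r = c then g r else 0)"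
    by (intro sum.cong) (auto simp: sfun_def)
  then show ?thesis using True c by simp
next
  case False
  show ?thesis
  proof (cases "c = n")
    case True
    have "(\<Sum>r\<in>{0..<n+k}. sfun n k r c * g r) =
       (\<Sum>r\<in>{0..<n}. sfun n k r c * g r) + (\<Sum>r\<in>{n..<n+k}. sfun n k r c * g r)"
      by (rule sum_split_pend)
    also have "(\<Sum>r\<in>{0..<n}. sfun n k r c * g r) = 0"
      using True by (intro sum.neutral) (auto simp: sfun_def)
    also have "(\<Sum>r\<in>{n..<n+k}. sfun n k r c * g r) = (\<Sum>r\<in>{n..<n+k}. g r / real k)"
      using True by (intro sum.cong) (auto simp: sfun_def)
    also have "\<dots> = (\<Sum>r\<in>{n..<n+k}. g r) / real k" by (simp add: sum_divide_distrib)
    finally show ?thesis using True by simp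
  next
    case False2: False
    have "(\<Sum>r\<in>{0..<n+k}. sfun n k r c * g r) =
        (\<Sum>r\<in>{0..<n+k}. (if r = c then g r else 0) - (if r = n then g r else 0))"
      using False False2 by (intro sum.cong) (auto simp: sfun_def)
    also have "\<dots> = g c - g n" using c False False2 by (simp add: sum_subtractf)
    finally show ?thesis using False False2 by simp
  qed
qed

lemma entry_STAS:
  fixes A :: "real mat"
  assumes A: "A \<in> carrier_mat (n+k) (n+k)" and a: "a < n + k" and b: "b < n + k"
  shows "(transpose_mat (mat (n+k) (n+k) (\<lambda>(r,l). sfun n k r l)) * A * mat (n+k) (n+k) (\<lambda>(r,l). sfun n k r l)) $$ (a,b)
    = (\<Sum>l\<in>{0..<n+k}. sfun n k l b * (\<Sum>r\<in>{0..<n+k}. sfun n k r a * A $$ (r,l)))"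
  using A a b by (auto simp: scalar_prod_def mult.commute intro!: sum.cong)

lemma entry_RS:
  assumes r: "r < n + k" and c: "c < n + k"
  shows "(mat (n+k) (n+k) (\<lambda>(r,l). rfun n k r l) * mat (n+k) (n+k) (\<lambda>(r,l). sfun n k r l)) $$ (r,c)
    = (\<Sum>l\<in>{0..<n+k}. sfun n k l c * rfun n k r l)"
  using r c by (auto simp: scalar_prod_def mult.commute intro!: sum.cong)

lemma RS_one:
  assumes k: "0 < k"
  shows "mat (n+k) (n+k) (\<lambda>(r,l). rfun n k r l) * mat (n+k) (n+k) (\<lambda>(r,l). sfun n k r l) = 1\<^sub>m (n+k)"
proof (rule eq_matI)
  fix r c assume "r < dim_row (1\<^sub>m (n+k))" "c < dim_col (1\<^sub>m (n+k))"
  hence r: "r < n + k" and c: "c < n + k" by auto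
  have "(\<Sum>l\<in>{0..<n+k}. sfun n k l c * rfun n k r l) = (if r = c then 1 else 0)"
  proof -
    have main: "(\<Sum>l\<in>{0..<n+k}. sfun n k l c * rfun n k r l) =
      (if c < n then rfun n k r c else if c = n then (\<Sum>l\<in>{n..<n+k}. rfun n k r l) / real k
       else rfun n k r c - rfun n k r n)" by (rule sum_sfun[OF c])
    show ?thesis
    proof (cases "c < n")
      case True thus ?thesis unfolding main by (simp add: rfun_def)
    next
      case False
      show ?thesis
      proof (cases "c = n")
        case True
        have "(\<Sum>l\<in>{n..<n+k}. rfun n k r l) = (\<Sum>l\<in>{n..<n+k}. (if r = n then 1 else 0) + (if r = l \<and> l \<noteq> n then 1 else 0) - (if n < r then 1 / real k else 0))"
          by (intro sum.cong) (auto simp: rfun_def)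
        also have "\<dots> = real k * (if r = n then 1 else 0) + (\<Sum>l\<in>{n..<n+k}. if r = l \<and> l \<noteq> n then 1 else 0) - real k * (if n < r then 1 / real k else 0)"
          by (simp add: sum.distrib sum_subtractf)
        also have "(\<Sum>l\<in>{n..<n+k}. if r = l \<and> l \<noteq> n then 1 else 0) = (if n < r then (1::real) else 0)"
        proof -
          have "(\<Sum>l\<in>{n..<n+k}. if r = l \<and> l \<noteq> n then 1 else 0) = (\<Sum>l\<in>{n..<n+k}. if l = r then (if n < r then 1 else 0) else (0::real))"
            by (intro sum.cong) auto
          also have "\<dots> = (if n < r then 1 else 0)" using r by (auto simp: sum.delta)
          finally show ?thesis .
        qed
        finally show ?thesis unfolding main using True k by auto
      next
        case False2: False
        show ?thesis unfolding main using False False2 by (auto simp: rfun_def)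
      qed
    qed
  qed
  thus "(mat (n+k) (n+k) (\<lambda>(r,l). rfun n k r l) * mat (n+k) (n+k) (\<lambda>(r,l). sfun n k r l)) $$ (r,c) = 1\<^sub>m (n+k) $$ (r,c)"
    using entry_RS[OF r c] r c by simp
qed auto

lemma main_linalg:
  fixes D T :: "real mat" and n k :: nat
  assumes k: "2 \<le> k"
    and D: "D \<in> carrier_mat (n+k) (n+k)" and symD: "transpose_mat D = D"
    and T: "T \<in> carrier_mat (n+1) (n+1)" and symT: "transpose_mat T = T"
    and F1: "\<And>r l. r < n \<Longrightarrow> l < n \<Longrightarrow> D $$ (r,l) = T $$ (r,l)"
    and F2: "\<And>r p. r < n \<Longrightarrow> n \<le> p \<Longrightarrow> p < n + k \<Longrightarrow> D $$ (r,p) = T $$ (r,n)"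
    and F3: "\<And>p q. n \<le> p \<Longrightarrow> p < n + k \<Longrightarrow> n \<le> q \<Longrightarrow> q < n + k \<Longrightarrow> D $$ (p,q) = (if p = q then 0 else 4)"
    and Tnn: "T $$ (n,n) = 4 - 4 / real k"
  shows "neg_inertia D = k - 1 + neg_inertia T"
proof -
  let ?N = "n + k"
  define S where "S = mat ?N ?N (\<lambda>(r,l). sfun n k r l)"
  define R where "R = mat ?N ?N (\<lambda>(r,l). rfun n k r l)"
  define L where "L = mat (k-1) (k-1) (\<lambda>(i,j). - 4 * ((if i = j then 1 else 0) + 1) :: real)"
  have S: "S \<in> carrier_mat ?N ?N" and R: "R \<in> carrier_mat ?N ?N" unfolding S_def R_def by auto
  have L: "L \<in> carrier_mat (k-1) (k-1)" unfolding L_def by auto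
  have kpos: "0 < k" "0 < real k" using k by auto
  have RS: "R * S = 1\<^sub>m ?N" unfolding R_def S_def by (rule RS_one[OF kpos(1)])
  have SR: "S * R = 1\<^sub>m ?N" by (rule mat_mult_left_right_inverse[OF R S RS])
  have F2': "D $$ (p,r) = T $$ (r,n)" if "r < n" "n \<le> p" "p < n + k" for r p
  proof -
    have "D $$ (p,r) = transpose_mat D $$ (r,p)" using D that by simp
    thus ?thesis unfolding symD using F2[OF that] by simp
  qed
  have Tsym: "T $$ (i,j) = T $$ (j,i)" if "i < n + 1" "j < n + 1" for i j
  proof -
    have "T $$ (i,j) = transpose_mat T $$ (j,i)" using T that by simp
    thus ?thesis unfolding symT .
  qed
  have Dsym: "D $$ (i,j) = D $$ (j,i)" if "i < n + k" "j < n + k" for i j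
  proof -
    have "D $$ (i,j) = transpose_mat D $$ (j,i)" using D that by simp
    thus ?thesis unfolding symD .
  qed
  have SP1: "(\<Sum>r\<in>{n..<n+k}. D $$ (r,l)) = real k * T $$ (l,n)" if "l < n" for l
  proof -
    have "(\<Sum>r\<in>{n..<n+k}. D $$ (r,l)) = (\<Sum>r\<in>{n..<n+k}. T $$ (l,n))"
      using that by (intro sum.cong) (auto simp: F2')
    thus ?thesis by simp
  qed
  have SP2: "(\<Sum>r\<in>{n..<n+k}. D $$ (l,r)) = real k * T $$ (l,n)" if "l < n" for l
  proof -
    have "(\<Sum>r\<in>{n..<n+k}. D $$ (l,r)) = (\<Sum>r\<in>{n..<n+k}. T $$ (l,n))"
      using that by (intro sum.cong) (auto simp: F2)
    thus ?thesis by simp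
  qed
  have SP3: "(\<Sum>r\<in>{n..<n+k}. D $$ (r,l)) = 4 * (real k - 1)" if "n \<le> l" "l < n + k" for l
  proof -
    have "(\<Sum>r\<in>{n..<n+k}. D $$ (r,l)) = (\<Sum>r\<in>{n..<n+k}. 4 - (if r = l then 4 else 0))"
      using that by (intro sum.cong) (auto simp: F3)
    also have "\<dots> = 4 * real k - 4" using that by (simp add: sum_subtractf)
    finally show ?thesis by simp
  qed
  have SP4: "(\<Sum>r\<in>{n..<n+k}. D $$ (l,r)) = 4 * (real k - 1)" if "n \<le> l" "l < n + k" for l
  proof -
    have "(\<Sum>r\<in>{n..<n+k}. D $$ (l,r)) = (\<Sum>r\<in>{n..<n+k}. 4 - (if r = l then 4 else 0))"
      using that by (intro sum.cong) (auto simp: F3)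
    also have "\<dots> = 4 * real k - 4" using that by (simp add: sum_subtractf)
    finally show ?thesis by simp
  qed
  define G where "G a l = (\<Sum>r\<in>{0..<n+k}. sfun n k r a * D $$ (r,l))" for a l
  have G: "G a l = (if a < n then D $$ (a,l) else if a = n then (\<Sum>r\<in>{n..<n+k}. D $$ (r,l)) / real k
       else D $$ (a,l) - D $$ (n,l))" if "a < n + k" for a l
    unfolding G_def by (rule sum_sfun[OF that])
  have Gn: "G n l = 4 * (real k - 1) / real k" if "n \<le> l" "l < n + k" for l
    using G[of n l] SP3[OF that] k by simp
  define B where "B = four_block_mat T (0\<^sub>m (n+1) (k-1)) (0\<^sub>m (k-1) (n+1)) L"
  have dimeq: "n + 1 + (k - 1) = n + k" using k by simp
  have B: "B \<in> carrier_mat ?N ?N" unfolding B_def using four_block_carrier_mat[OF T L] unfolding dimeq .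
  have SDS: "transpose_mat S * D * S = B"
  proof (rule eq_matI)
    fix a b assume "a < dim_row B" "b < dim_col B"
    hence a: "a < n + k" and b: "b < n + k" using B by auto
    have e: "(transpose_mat S * D * S) $$ (a,b) = (\<Sum>l\<in>{0..<n+k}. sfun n k l b * G a l)"
      unfolding S_def G_def by (rule entry_STAS[OF D a b])
    also have "\<dots> = (if b < n then G a b else if b = n then (\<Sum>l\<in>{n..<n+k}. G a l) / real k else G a b - G a n)"
      by (rule sum_sfun[OF b])
    finally have e: "(transpose_mat S * D * S) $$ (a,b) = \<dots>" .
    have Bab: "B $$ (a,b) = (if a < n + 1 then (if b < n + 1 then T $$ (a,b) else 0)
       else (if b < n + 1 then 0 else - 4 * ((if a = b then 1 else 0) + 1)))"
      unfolding B_def L_def using a b T L k by auto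
    show "(transpose_mat S * D * S) $$ (a,b) = B $$ (a,b)"
    proof (cases "a < n")
      case aa: True
      show ?thesis
      proof (cases "b < n")
        case True thus ?thesis unfolding e Bab using aa G[OF a] by (simp add: F1)
      next
        case bb: False
        show ?thesis
        proof (cases "b = n")
          case True
          have "(\<Sum>l\<in>{n..<n+k}. G a l) = (\<Sum>l\<in>{n..<n+k}. D $$ (a,l))"
            using aa G[OF a] by simp
          thus ?thesis unfolding e Bab using aa True SP2[OF aa] kpos by simp
        next
          case False
          thus ?thesis unfolding e Bab using aa bb b G[OF a] F2[OF aa, of b] F2[OF aa, of n] k by simp
        qed
      qed
    next
      case aa: False
      show ?thesis
      proof (cases "a = n")
        case an: True
        show ?thesis
        proof (cases "b < n")
          case True
          thus ?thesis unfolding e Bab using an G[OF a] SP1[OF True] kpos Tsym[of b n] by simp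
        next
          case bb: False
          show ?thesis
          proof (cases "b = n")
            case True
            have "(\<Sum>l\<in>{n..<n+k}. G a l) = (\<Sum>l\<in>{n..<n+k}. 4 * (real k - 1) / real k)"
              using an by (intro sum.cong) (auto simp: Gn)
            also have "\<dots> = 4 * (real k - 1)" using kpos by simp
            finally have sG: "(\<Sum>l\<in>{n..<n+k}. G a l) = 4 * (real k - 1)" .
            have "(\<Sum>l\<in>{n..<n+k}. G a l) / real k = 4 - 4 / real k"
              unfolding sG using kpos by (simp add: field_simps)
            thus ?thesis unfolding e Bab using an True Tnn by simp
          next
            case False
            thus ?thesis unfolding e Bab using an bb b Gn[of b] Gn[of n] k by simp
          qed
        qed
      next
        case an: False
        have Ga: "G a l = D $$ (a,l) - D $$ (n,l)" for l using G[OF a] aa an by simp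
        show ?thesis
        proof (cases "b < n")
          case True
          thus ?thesis unfolding e Bab Ga using aa an a F2'[OF True, of a] F2'[OF True, of n] k by simp
        next
          case bb: False
          show ?thesis
          proof (cases "b = n")
            case True
            have "(\<Sum>l\<in>{n..<n+k}. G a l) = (\<Sum>l\<in>{n..<n+k}. D $$ (a,l)) - (\<Sum>l\<in>{n..<n+k}. D $$ (n,l))"
              unfolding Ga by (simp add: sum_subtractf)
            also have "\<dots> = 0" using SP4[of a] SP4[of n] aa a k by simp
            finally show ?thesis unfolding e Bab using aa an True by simp
          next
            case False
            thus ?thesis unfolding e Bab Ga using aa an bb a b F3 k by auto
          qed
        qed
      qed
    qed
  qed (use B S in auto)
  have symL: "transpose_mat L = L" unfolding L_def by (rule eq_matI) auto
  have ndL: "y \<bullet> (L *\<^sub>v y) < 0" if y: "y \<in> carrier_vec (k-1)" "y \<noteq> 0\<^sub>v (k-1)" for y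
  proof -
    have Ly: "(L *\<^sub>v y) $ i = - 4 * (y $ i + (\<Sum>j\<in>{0..<k-1}. y $ j))" if i: "i < k - 1" for i
    proof -
      have "(L *\<^sub>v y) $ i = (\<Sum>j\<in>{0..<k-1}. - 4 * ((if i = j then 1 else 0) + 1) * y $ j)"
        using i y unfolding L_def by (simp add: scalar_prod_def)
      also have "\<dots> = (\<Sum>j\<in>{0..<k-1}. (if j = i then - 4 * y $ j else 0) + (- 4) * y $ j)"
        by (intro sum.cong) (auto simp: algebra_simps)
      also have "\<dots> = (\<Sum>j\<in>{0..<k-1}. (if j = i then - 4 * y $ j else 0)) + (\<Sum>j\<in>{0..<k-1}. (- 4) * y $ j)"
        by (rule sum.distrib)
      also have "\<dots> = - 4 * y $ i + (- 4) * (\<Sum>j\<in>{0..<k-1}. y $ j)"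
        using i by (simp add: sum_distrib_left)
      also have "\<dots> = - 4 * (y $ i + (\<Sum>j\<in>{0..<k-1}. y $ j))" by (simp add: algebra_simps)
      finally show ?thesis .
    qed
    have "y \<bullet> (L *\<^sub>v y) = (\<Sum>i\<in>{0..<k-1}. y $ i * (- 4 * (y $ i + (\<Sum>j\<in>{0..<k-1}. y $ j))))"
      using y L Ly unfolding scalar_prod_def by (intro sum.cong) auto
    also have "\<dots> = (\<Sum>i\<in>{0..<k-1}. (- 4) * (y $ i)^2 + (- 4 * (\<Sum>j\<in>{0..<k-1}. y $ j)) * y $ i)"
      by (intro sum.cong) (auto simp: algebra_simps power2_eq_square)
    also have "\<dots> = (- 4) * (\<Sum>i\<in>{0..<k-1}. (y $ i)^2) + (- 4 * (\<Sum>j\<in>{0..<k-1}. y $ j)) * (\<Sum>i\<in>{0..<k-1}. y $ i)"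
      by (simp only: sum.distrib sum_distrib_left)
    also have "\<dots> = - 4 * ((\<Sum>i\<in>{0..<k-1}. (y $ i)^2) + (\<Sum>j\<in>{0..<k-1}. y $ j)^2)"
      by (simp add: power2_eq_square algebra_simps)
    also have "\<dots> < 0"
    proof -
      have "0 < (\<Sum>i\<in>{0..<k-1}. (y $ i)^2)" using self_scalar_pos[OF y] y unfolding scalar_prod_def
        by (simp add: power2_eq_square)
      moreover have "0 \<le> (\<Sum>j\<in>{0..<k-1}. y $ j)^2" by simp
      ultimately have "0 < (\<Sum>i\<in>{0..<k-1}. (y $ i)^2) + (\<Sum>j\<in>{0..<k-1}. y $ j)^2" by linarith
      thus ?thesis by (simp only: mult_less_0_iff) simp
    qed
    finally show ?thesis .
  qed
  have "neg_inertia D = neg_inertia (transpose_mat S * D * S)"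
    using sylvester_eq[OF D symD S R SR] by simp
  also have "\<dots> = neg_inertia T + neg_inertia L"
    unfolding SDS B_def by (rule neg_inertia_block[OF T symT L symL])
  also have "neg_inertia L = k - 1" by (rule neg_inertia_negdef[OF L symL ndL])
  finally show ?thesis by simp
qed

lemma walk_rev:
  assumes "is_walk N Adj xs" and sym: "\<And>a b. Adj a b \<Longrightarrow> Adj b a"
  shows "is_walk N Adj (rev xs)"
  unfolding is_walk_def
proof (intro conjI allI impI)
  show "rev xs \<noteq> []" "set (rev xs) \<subseteq> {..<N}" using assms(1) unfolding is_walk_def by auto
  fix i assume i: "Suc i < length (rev xs)"
  let ?m = "length xs"
  have 1: "rev xs ! i = xs ! (?m - 1 - i)" using i by (simp add: rev_nth)
  have 2: "rev xs ! Suc i = xs ! (?m - 1 - Suc i)" using i by (simp add: rev_nth)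
  have "Adj (xs ! (?m - 1 - Suc i)) (xs ! Suc (?m - 1 - Suc i))"
    using assms(1) i unfolding is_walk_def by auto
  moreover have "Suc (?m - 1 - Suc i) = ?m - 1 - i" using i by simp
  ultimately show "Adj (rev xs ! i) (rev xs ! Suc i)" unfolding 1 2 using sym by metis
qed

lemma walk_snoc:
  assumes "is_walk N Adj xs" "Adj (last xs) b" "b < N"
  shows "is_walk N Adj (xs @ [b])"
  unfolding is_walk_def
proof (intro conjI allI impI)
  show "xs @ [b] \<noteq> []" by simp
  show "set (xs @ [b]) \<subseteq> {..<N}" using assms unfolding is_walk_def by auto
  fix i assume i: "Suc i < length (xs @ [b])"
  have ne: "xs \<noteq> []" using assms(1) unfolding is_walk_def by auto
  show "Adj ((xs @ [b]) ! i) ((xs @ [b]) ! Suc i)"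
  proof (cases "Suc i < length xs")
    case True
    then show ?thesis using assms(1) unfolding is_walk_def by (auto simp: nth_append)
  next
    case False
    hence "Suc i = length xs" using i by simp
    hence ii: "i = length xs - 1" by simp
    have "(xs @ [b]) ! i = last xs" using ne ii by (simp add: nth_append last_conv_nth)
    moreover have "(xs @ [b]) ! Suc i = b" using \<open>Suc i = length xs\<close> by (simp add: nth_append)
    ultimately show ?thesis using assms(2) by simp
  qed
qed

lemma walk_map:
  assumes "is_walk N1 Adj1 xs"
    and hom: "\<And>a b. a < N1 \<Longrightarrow> b < N1 \<Longrightarrow> Adj1 a b \<Longrightarrow> Adj2 (f a) (f b)"
    and rng: "\<And>a. a < N1 \<Longrightarrow> f a < N2"
  shows "is_walk N2 Adj2 (map f xs)"
  using assms unfolding is_walk_def by (auto simp: subset_iff)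

lemma gdist_le:
  assumes "is_walk N Adj xs" "hd xs = u" "last xs = v"
  shows "gdist N Adj u v \<le> length xs - 1"
proof -
  have "xs \<noteq> []" using assms unfolding is_walk_def by auto
  hence "length xs = Suc (length xs - 1)" by simp
  thus ?thesis unfolding gdist_def using assms by (intro Least_le) blast
qed

lemma gdist_ex:
  assumes "is_walk N Adj xs" "hd xs = u" "last xs = v"
  shows "\<exists>ys. is_walk N Adj ys \<and> hd ys = u \<and> last ys = v \<and> length ys = Suc (gdist N Adj u v)"
proof -
  have "xs \<noteq> []" using assms unfolding is_walk_def by auto
  hence "length xs = Suc (length xs - 1)" by simp
  hence "\<exists>l ys. is_walk N Adj ys \<and> hd ys = u \<and> last ys = v \<and> length ys = Suc l" using assms by blast
  thus ?thesis unfolding gdist_def by (rule LeastI_ex)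
qed

lemma gdist_map:
  assumes "is_walk N1 Adj1 xs" "hd xs = u" "last xs = v"
    and hom: "\<And>a b. a < N1 \<Longrightarrow> b < N1 \<Longrightarrow> Adj1 a b \<Longrightarrow> Adj2 (f a) (f b)"
    and rng: "\<And>a. a < N1 \<Longrightarrow> f a < N2"
  shows "gdist N2 Adj2 (f u) (f v) \<le> gdist N1 Adj1 u v"
proof -
  obtain ys where ys: "is_walk N1 Adj1 ys" "hd ys = u" "last ys = v" "length ys = Suc (gdist N1 Adj1 u v)"
    using gdist_ex[OF assms(1-3)] by blast
  have ne: "ys \<noteq> []" using ys(1) unfolding is_walk_def by auto
  have "is_walk N2 Adj2 (map f ys)" by (rule walk_map[of N1 Adj1 ys Adj2 f N2, OF ys(1) hom rng])
  moreover have "hd (map f ys) = f u" "last (map f ys) = f v" using ne ys by (auto simp: hd_map last_map)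
  ultimately have "gdist N2 Adj2 (f u) (f v) \<le> length (map f ys) - 1" by (rule gdist_le)
  thus ?thesis using ys(4) by simp
qed

lemma gdist_sym:
  assumes sym: "\<And>a b. Adj a b \<Longrightarrow> Adj b a"
  shows "gdist N Adj u v = gdist N Adj v u"
proof -
  have "(\<exists>xs. is_walk N Adj xs \<and> hd xs = u \<and> last xs = v \<and> length xs = Suc l) \<longleftrightarrow>
        (\<exists>xs. is_walk N Adj xs \<and> hd xs = v \<and> last xs = u \<and> length xs = Suc l)" for l u v
  proof
    assume "\<exists>xs. is_walk N Adj xs \<and> hd xs = u \<and> last xs = v \<and> length xs = Suc l"
    then obtain xs where xs: "is_walk N Adj xs" "hd xs = u" "last xs = v" "length xs = Suc l" by blast
    have ne: "xs \<noteq> []" using xs(1) unfolding is_walk_def by auto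
    show "\<exists>xs. is_walk N Adj xs \<and> hd xs = v \<and> last xs = u \<and> length xs = Suc l"
      by (rule exI[of _ "rev xs"], use walk_rev[OF xs(1) sym] xs ne in \<open>auto simp: hd_rev last_rev\<close>)
  next
    assume "\<exists>xs. is_walk N Adj xs \<and> hd xs = v \<and> last xs = u \<and> length xs = Suc l"
    then obtain xs where xs: "is_walk N Adj xs" "hd xs = v" "last xs = u" "length xs = Suc l" by blast
    have ne: "xs \<noteq> []" using xs(1) unfolding is_walk_def by auto
    show "\<exists>xs. is_walk N Adj xs \<and> hd xs = u \<and> last xs = v \<and> length xs = Suc l"
      by (rule exI[of _ "rev xs"], use walk_rev[OF xs(1) sym] xs ne in \<open>auto simp: hd_rev last_rev\<close>)
  qed
  thus ?thesis unfolding gdist_def by simp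
qed

lemma gdist_self:
  assumes "u < N"
  shows "gdist N Adj u u = 0"
proof -
  have "is_walk N Adj [u]" using assms unfolding is_walk_def by auto
  from gdist_le[OF this] show ?thesis by simp
qed

lemma pend_sym:
  assumes "simple_graph n Adj'" "add_pendants n Adj' w k a b"
  shows "add_pendants n Adj' w k b a"
  using assms unfolding simple_graph_def add_pendants_def by blast

lemma pend_lift:
  assumes sg: "simple_graph n Adj'" and xs: "is_walk n Adj' xs" and N: "n \<le> N"
  shows "is_walk N (add_pendants n Adj' w k) xs"
proof -
  have "is_walk N (add_pendants n Adj' w k) (map (\<lambda>x. x) xs)"
    by (rule walk_map[OF xs], auto simp: add_pendants_def, use N in simp)
  thus ?thesis by simp
qed

lemma pend_G'walk:
  assumes sg: "simple_graph n Adj'" and con: "connected_graph n Adj'" and u: "u < n" and v: "v < n" and N: "n \<le> N"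
  shows "\<exists>xs. is_walk N (add_pendants n Adj' w k) xs \<and> hd xs = u \<and> last xs = v"
proof -
  obtain xs where "is_walk n Adj' xs" "hd xs = u" "last xs = v" using con u v unfolding connected_graph_def by blast
  thus ?thesis using pend_lift[OF sg _ N] by blast
qed

lemma proposition3p1_aux:
  fixes n w k :: nat and Adj' :: "nat \<Rightarrow> nat \<Rightarrow> bool"
  assumes sg: "simple_graph n Adj'" and con: "connected_graph n Adj'"
    and wn: "w < n" and k: "k \<ge> 2"
  shows "neg_inertia (dist_sq_mat (n + k) (add_pendants n Adj' w k)) =
         k - 1 + neg_inertia (dist_sq_mat (n + 1) (add_pendants n Adj' w k)
           + (4 - 4 / real k) \<cdot>\<^sub>m
             (mat_of_cols (n + 1) [unit_vec (n + 1) n] * mat_of_rows (n + 1) [unit_vec (n + 1) n]))"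
proof -
  let ?G = "add_pendants n Adj' w k"
  let ?c = "4 - 4 / real k"
  define D where "D = dist_sq_mat (n + k) ?G"
  define T where "T = dist_sq_mat (n + 1) ?G + ?c \<cdot>\<^sub>m
             (mat_of_cols (n + 1) [unit_vec (n + 1) n] * mat_of_rows (n + 1) [unit_vec (n + 1) n])"
  have gsym: "\<And>a b. ?G a b \<Longrightarrow> ?G b a" using pend_sym[OF sg] by blast
  have D: "D \<in> carrier_mat (n+k) (n+k)" unfolding D_def dist_sq_mat_def by simp
  have Dent: "D $$ (i,j) = (real (gdist (n+k) ?G i j))^2" if "i < n + k" "j < n + k" for i j
    unfolding D_def dist_sq_mat_def using that by simp
  have T: "T \<in> carrier_mat (n+1) (n+1)" unfolding T_def dist_sq_mat_def carrier_mat_def by simp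
  have Tent: "T $$ (i,j) = (real (gdist (n+1) ?G i j))^2 + ?c * (if i = n \<and> j = n then 1 else 0)"
    if "i < n + 1" "j < n + 1" for i j
    unfolding T_def dist_sq_mat_def using that
    by (simp add: scalar_prod_def mat_of_cols_def mat_of_rows_def unit_vec_def)
  have symD: "transpose_mat D = D"
    by (rule eq_matI, use D in auto, simp add: Dent gdist_sym[OF gsym])
  have symT: "transpose_mat T = T"
    by (rule eq_matI, use T in auto, simp add: Tent gdist_sym[OF gsym] conj_commute)
  define pi where "pi a = (if a < n then a else n)" for a
  have hom_pi: "?G (pi a) (pi b)" if "a < n + k" "b < n + k" "?G a b" for a b
    using that wn k unfolding pi_def add_pendants_def by auto
  have rng_pi: "pi a < n + 1" for a unfolding pi_def by auto
  have hom_id: "?G a b" if "a < n + 1" "b < n + 1" "?G a b" for a b using that by simp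
  have rng_id: "a < n + k" if "a < n + 1" for a using that k by simp
  have F1: "D $$ (r,l) = T $$ (r,l)" if r: "r < n" and l: "l < n" for r l
  proof -
    obtain xs where xs: "is_walk (n+1) ?G xs" "hd xs = r" "last xs = l" using pend_G'walk[OF sg con r l, of "n+1"] by auto
    obtain ys where ys: "is_walk (n+k) ?G ys" "hd ys = r" "last ys = l" using pend_G'walk[OF sg con r l, of "n+k"] by auto
    have 1: "gdist (n+k) ?G r l \<le> gdist (n+1) ?G r l"
      using gdist_map[of "n+1" ?G xs r l ?G "\<lambda>x. x" "n+k", OF xs hom_id rng_id] by simp
    have 2: "gdist (n+1) ?G (pi r) (pi l) \<le> gdist (n+k) ?G r l"
      by (rule gdist_map[of "n+k" ?G ys r l ?G pi "n+1", OF ys hom_pi rng_pi])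
    have "gdist (n+k) ?G r l = gdist (n+1) ?G r l" using 1 2 r l unfolding pi_def by simp
    thus ?thesis using Dent Tent r l k by simp
  qed
  have F2: "D $$ (r,p) = T $$ (r,n)" if r: "r < n" and p1: "n \<le> p" and p2: "p < n + k" for r p
  proof -
    obtain xs where xs: "is_walk n Adj' xs" "hd xs = r" "last xs = w" using con r wn unfolding connected_graph_def by blast
    have ne: "xs \<noteq> []" using xs unfolding is_walk_def by auto
    have w1: "is_walk (n+1) ?G (xs @ [n])"
      by (rule walk_snoc, rule pend_lift[OF sg xs(1)], use xs(3) k in \<open>auto simp: add_pendants_def\<close>)
    have w2: "is_walk (n+k) ?G (xs @ [p])"
      by (rule walk_snoc, rule pend_lift[OF sg xs(1)], use xs(3) k p1 p2 in \<open>auto simp: add_pendants_def\<close>)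
    define tau where "tau a = (if a = n then p else a)" for a
    have hom_tau: "?G (tau a) (tau b)" if "a < n + 1" "b < n + 1" "?G a b" for a b
      using that wn p1 p2 unfolding tau_def add_pendants_def by auto
    have rng_tau: "tau a < n + k" if "a < n + 1" for a using that k p2 unfolding tau_def by auto
    have 1: "gdist (n+k) ?G (tau r) (tau n) \<le> gdist (n+1) ?G r n"
      by (rule gdist_map[of "n+1" ?G "xs @ [n]" r n ?G tau "n+k", OF w1 _ _ hom_tau rng_tau], use ne xs in auto)
    have 2: "gdist (n+1) ?G (pi r) (pi p) \<le> gdist (n+k) ?G r p"
      by (rule gdist_map[of "n+k" ?G "xs @ [p]" r p ?G pi "n+1", OF w2 _ _ hom_pi rng_pi], use ne xs in auto)
    have "gdist (n+k) ?G r p = gdist (n+1) ?G r n" using 1 2 r p1 unfolding pi_def tau_def by simp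
    thus ?thesis using Dent Tent r p2 by simp
  qed
  have F3: "D $$ (p,q) = (if p = q then 0 else 4)" if p: "n \<le> p" "p < n + k" and q: "n \<le> q" "q < n + k" for p q
  proof (cases "p = q")
    case True
    thus ?thesis using Dent p gdist_self[of p "n+k" ?G] by simp
  next
    case False
    have wk: "is_walk (n+k) ?G [p, w, q]"
      unfolding is_walk_def using p q wn
      by (auto simp: add_pendants_def less_Suc_eq nth_Cons split: nat.splits)
    have le: "gdist (n+k) ?G p q \<le> 2" using gdist_le[OF wk, of p q] by simp
    obtain ys where ys: "is_walk (n+k) ?G ys" "hd ys = p" "last ys = q" "length ys = Suc (gdist (n+k) ?G p q)"
      using gdist_ex[OF wk] by auto
    have ge: "2 \<le> gdist (n+k) ?G p q"
    proof (rule ccontr)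
      assume "\<not> 2 \<le> gdist (n+k) ?G p q"
      hence "length ys = 1 \<or> length ys = 2" using ys(4) by auto
      thus False
      proof
        assume "length ys = 1"
        then obtain x where "ys = [x]" by (metis One_nat_def length_0_conv length_Suc_conv)
        thus False using ys False by simp
      next
        assume l2: "length ys = 2"
        then obtain x y where xy: "ys = [x, y]"
          by (metis One_nat_def Suc_1 length_0_conv length_Suc_conv)
        hence "?G p q" using ys(1-3) unfolding is_walk_def by auto
        thus False using p q wn unfolding add_pendants_def by auto
      qed
    qed
    have "gdist (n+k) ?G p q = 2" using le ge by simp
    thus ?thesis using Dent p q False by simp
  qed
  have Tnn: "T $$ (n,n) = 4 - 4 / real k"
    using Tent[of n n] gdist_self[of n "n+1" ?G] by simp
  have "neg_inertia D = k - 1 + neg_inertia T"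
    by (rule main_linalg[OF k D symD T symT F1 F2 F3 Tnn])
  thus ?thesis unfolding D_def T_def .
qed

theorem proposition3p1:
  fixes n w k :: nat and Adj' :: "nat \<Rightarrow> nat \<Rightarrow> bool"
  assumes "simple_graph n Adj'" and "connected_graph n Adj'"
    and "w < n" and "k \<ge> 2"
  shows "neg_inertia (dist_sq_mat (n + k) (add_pendants n Adj' w k)) =
         k - 1 + neg_inertia (dist_sq_mat (n + 1) (add_pendants n Adj' w k)
           + (4 - 4 / real k) \<cdot>\<^sub>m
             (mat_of_cols (n + 1) [unit_vec (n + 1) n] * mat_of_rows (n + 1) [unit_vec (n + 1) n]))"
  by (rule proposition3p1_aux[OF assms])

end
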